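(* Let $f\colon\mathbb{R}^n\to\mathbb{R}$ be continuous and suppose there is $\gamma>0$ such that (i) the set $S_\gamma=\{z\in\mathbb{R}^n : f(z)\le\inf f+\gamma\}$ is compact, and (ii) every $x\in S_\gamma$ with $0\in\partial f(x)$ is a global minimizer of $f$. Let $t\in(0,\infty)$ and let $x\in\mathbb{R}^n$ be a local minimizer of $u(\cdot,t)$. Then $x$ is a local minimizer of $f$, $u(x,t)=f(x)$, $\operatorname{prox}_{tf}(x)=\{x\}$, $u(\cdot,t)$ is differentiable at $x$, and $\nabla u(x,t)=0$.
   Context: $\operatorname{prox}_{tf}(x)=\operatorname{argmin}_{z\in\mathbb{R}^n}\big(f(z)+\frac{1}{2t}\|z-x\|^2\big)$ and $u(x,t)=\inf_{z\in\mathbb{R}^n}\big(f(z)+\frac{1}{2t}\|z-x\|^2\big)$; $\nabla u$ denotes the gradient in $x$. The subdifferential $\partial f(\bar x)$ is the set of all $v\in\mathbb{R}^n$ such that $f(x)\ge f(\bar x)+\langle v,x-\bar x\rangle+o(\|x-\bar x\|)$ as $x\to\bar x$. *)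

theory Defs
  imports "HOL-Analysis.Analysis"
begin

definition moreau :: "('a::euclidean_space \<Rightarrow> real) \<Rightarrow> 'a \<Rightarrow> real \<Rightarrow> real" where
  "moreau f x t = (INF z. f z + (norm (z - x))\<^sup>2 / (2 * t))"

definition prox :: "('a::euclidean_space \<Rightarrow> real) \<Rightarrow> real \<Rightarrow> 'a \<Rightarrow> 'a set" where
  "prox f t x = {z. \<forall>w. f z + (norm (z - x))\<^sup>2 / (2 * t) \<le> f w + (norm (w - x))\<^sup>2 / (2 * t)}"

text \<open>(Frechet) subdifferential: f x \<ge> f xbar + <v, x - xbar> + o(|x - xbar|).\<close>
definition subdiff :: "('a::euclidean_space \<Rightarrow> real) \<Rightarrow> 'a \<Rightarrow> 'a set" where
  "subdiff f xbar = {v. \<forall>e>0. \<forall>\<^sub>F x in at xbar.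
      f x \<ge> f xbar + v \<bullet> (x - xbar) - e * norm (x - xbar)}"

definition local_minimizer :: "('a::euclidean_space \<Rightarrow> real) \<Rightarrow> 'a \<Rightarrow> bool" where
  "local_minimizer g x \<longleftrightarrow> (\<exists>r>0. \<forall>y\<in>ball x r. g x \<le> g y)"

definition global_minimizer :: "('a::euclidean_space \<Rightarrow> real) \<Rightarrow> 'a \<Rightarrow> bool" where
  "global_minimizer g x \<longleftrightarrow> (\<forall>y. g x \<le> g y)"

end

theory Submission
  imports Defs
begin

theorem lemma4:
  fixes f :: "'a::euclidean_space \<Rightarrow> real" and \<gamma> t :: real and x :: 'a
  assumes cont: "continuous_on UNIV f"
    and bdd: "bdd_below (range f)"
    and gam: "\<gamma> > 0"
    and cpt: "compact {z. f z \<le> Inf (range f) + \<gamma>}"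
    and crit: "\<And>y. f y \<le> Inf (range f) + \<gamma> \<Longrightarrow> 0 \<in> subdiff f y \<Longrightarrow> global_minimizer f y"
    and tpos: "t > 0"
    and locmin: "local_minimizer (\<lambda>y. moreau f y t) x"
  shows "local_minimizer f x \<and> moreau f x t = f x \<and> prox f t x = {x}
         \<and> (\<lambda>y. moreau f y t) differentiable (at x)
         \<and> ((\<lambda>y. moreau f y t) has_derivative (\<lambda>h. 0)) (at x)"
proof -
  define m where "m = Inf (range f)"
  have fm: "m \<le> f z" for z unfolding m_def using bdd by (simp add: cInf_lower)
  define g where "g = (\<lambda>z. f z + (norm (z - x))\<^sup>2 / (2 * t))"
  have bddy: "bdd_below (range (\<lambda>z. f z + (norm (z - y))\<^sup>2 / (2 * t)))" for y
  proof (rule bdd_belowI2[of _ m])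
    fix z show "m \<le> f z + (norm (z - y))\<^sup>2 / (2 * t)" using fm[of z] tpos by (smt (verit) divide_nonneg_pos zero_le_power2)
  qed
  have ule: "moreau f y t \<le> f z + (norm (z - y))\<^sup>2 / (2 * t)" for y z
    unfolding moreau_def by (rule cINF_lower[OF bddy]) simp
  obtain r where r: "r > 0" "\<And>y. y \<in> ball x r \<Longrightarrow> moreau f x t \<le> moreau f y t"
    using locmin unfolding local_minimizer_def by blast
  define S where "S = {z. g z \<le> g x}"
  have contg: "continuous_on UNIV g" unfolding g_def
    using tpos by (intro continuous_intros cont) auto
  have "closed S" unfolding S_def
    by (rule closed_Collect_le[OF contg]) (simp add: continuous_on_const)
  moreover have "bounded S"
  proof (rule bounded_subset[OF bounded_cball])
    show "S \<subseteq> cball x (sqrt (2 * t * (g x - m)))"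
    proof
      fix z assume "z \<in> S"
      hence "f z + (norm (z - x))\<^sup>2 / (2 * t) \<le> g x" unfolding S_def g_def by simp
      with fm[of z] have "(norm (z - x))\<^sup>2 / (2 * t) \<le> g x - m" by simp
      hence "(norm (z - x))\<^sup>2 \<le> 2 * t * (g x - m)" using tpos by (simp add: field_simps)
      hence "norm (z - x) \<le> sqrt (2 * t * (g x - m))" by (rule real_le_rsqrt)
      thus "z \<in> cball x (sqrt (2 * t * (g x - m)))" by (simp add: dist_norm norm_minus_commute)
    qed
  qed
  ultimately have "compact S" by (simp add: compact_eq_bounded_closed)
  moreover have "S \<noteq> {}" unfolding S_def by auto
  ultimately obtain z0 where "z0 \<in> S" "\<forall>y\<in>S. g z0 \<le> g y"
    using continuous_attains_inf[of S g] contg continuous_on_subset by blast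
  hence z0min: "\<forall>w. g z0 \<le> g w"
    by (metis (mono_tags, lifting) S_def mem_Collect_eq nle_le order_trans)
  have ueq: "moreau f x t = g z" if zm: "\<forall>w. g z \<le> g w" for z
  proof (rule antisym)
    show "moreau f x t \<le> g z" unfolding g_def by (rule ule)
    show "g z \<le> moreau f x t" unfolding moreau_def
      by (rule cINF_greatest) (use zm g_def in auto)
  qed
  have uniq: "z = x" if zm: "\<forall>w. g z \<le> g w" for z
  proof (rule ccontr)
    assume ne: "z \<noteq> x"
    define d where "d = norm (z - x)"
    have dpos: "d > 0" using ne unfolding d_def by simp
    define s where "s = min (1/2) (r / (2 * d))"
    have s0: "s > 0" using r dpos unfolding s_def by simp
    have s1: "s \<le> 1/2" unfolding s_def by simp
    have sd: "s * d < r"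
    proof -
      have "s * d \<le> r / (2 * d) * d" unfolding s_def using dpos by (intro mult_right_mono) auto
      also have "\<dots> = r / 2" using dpos by simp
      finally show ?thesis using r by simp
    qed
    define y where "y = x + s *\<^sub>R (z - x)"
    have "dist x y = s * d" unfolding y_def d_def dist_norm using s0 by simp
    hence "y \<in> ball x r" using sd by simp
    hence "moreau f x t \<le> moreau f y t" by (rule r(2))
    also have "\<dots> \<le> f z + (norm (z - y))\<^sup>2 / (2 * t)" by (rule ule)
    also have "z - y = (1 - s) *\<^sub>R (z - x)" unfolding y_def by (simp add: algebra_simps)
    hence "norm (z - y) = (1 - s) * d" unfolding d_def using s1 by simp
    finally have "moreau f x t \<le> f z + ((1 - s) * d)\<^sup>2 / (2 * t)" .
    moreover have "((1 - s) * d)\<^sup>2 < d\<^sup>2"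
    proof -
      have "(1 - s) * d < d" using s0 dpos by simp
      moreover have "0 \<le> (1 - s) * d" using s1 dpos by simp
      ultimately show ?thesis by (simp add: power_strict_mono)
    qed
    hence "((1 - s) * d)\<^sup>2 / (2 * t) < d\<^sup>2 / (2 * t)" using tpos by (simp add: divide_strict_right_mono)
    moreover have "moreau f x t = f z + d\<^sup>2 / (2 * t)" using ueq[OF zm] unfolding g_def d_def by simp
    ultimately show False by simp
  qed
  have "z0 = x" using uniq z0min .
  hence ux: "moreau f x t = f x" using ueq[OF z0min] unfolding g_def by simp
  have prox: "prox f t x = {x}"
  proof -
    have "prox f t x = {z. \<forall>w. g z \<le> g w}" unfolding prox_def g_def by simp
    also have "\<dots> = {x}" using uniq z0min \<open>z0 = x\<close> by blast
    finally show ?thesis .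
  qed
  have lm: "local_minimizer f x" unfolding local_minimizer_def
  proof (intro exI[of _ r] conjI ballI)
    show "r > 0" by (rule r)
    fix y assume "y \<in> ball x r"
    hence "f x \<le> moreau f y t" using r(2) ux by simp
    also have "\<dots> \<le> f y + (norm (y - y))\<^sup>2 / (2 * t)" by (rule ule)
    finally show "f x \<le> f y" by simp
  qed
  have der: "((\<lambda>y. moreau f y t) has_derivative (\<lambda>h. 0)) (at x)"
    unfolding has_derivative_at_alt
  proof (intro conjI allI impI)
    show "bounded_linear (\<lambda>h::'a. 0::real)" by simp
    fix e :: real assume e: "e > 0"
    show "\<exists>d>0. \<forall>y. norm (y - x) < d \<longrightarrow> norm (moreau f y t - moreau f x t - 0) \<le> e * norm (y - x)"
    proof (intro exI[of _ "min r (2 * t * e)"] conjI allI impI)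
      show "min r (2 * t * e) > 0" using r e tpos by simp
      fix y assume y: "norm (y - x) < min r (2 * t * e)"
      hence "y \<in> ball x r" by (simp add: dist_norm norm_minus_commute)
      hence lo: "moreau f x t \<le> moreau f y t" by (rule r(2))
      have hi: "moreau f y t \<le> f x + (norm (x - y))\<^sup>2 / (2 * t)" by (rule ule)
      have "(norm (x - y))\<^sup>2 / (2 * t) \<le> e * norm (y - x)"
      proof -
        have "(norm (y - x))\<^sup>2 = norm (y - x) * norm (y - x)" by (simp add: power2_eq_square)
        also have "\<dots> \<le> norm (y - x) * (2 * t * e)" using y by (intro mult_left_mono) auto
        finally show ?thesis using tpos by (simp add: norm_minus_commute field_simps)
      qed
      thus "norm (moreau f y t - moreau f x t - 0) \<le> e * norm (y - x)"
        using lo hi ux by simp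
    qed
  qed
  hence "(\<lambda>y. moreau f y t) differentiable (at x)" unfolding differentiable_def by blast
  with lm ux prox der show ?thesis by blast
qed

end
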